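(* Consider the first-stage fixed composition strategy searching among $1/\alpha$ sections, where at each time exactly $K^\ast=q^\ast/\alpha$ sections are probed (i.e. $|\mathbf S'_n|\alpha=q^\ast$), and let $\rho'_n$ be the posterior over sections. Then for all $n\ge1$, $$\mathbb E\big[U(\rho'_{n+1})-U(\rho'_n)\,\big|\,\mathcal F_n,\mathbf S'_n\big]\ge C_{\mathrm{BAWGN}}(q^\ast,q^\ast B\sigma^2),\qquad U(\rho):=\sum_{i=1}^{1/\alpha}\rho(i)\log\frac{\rho(i)}{1-\rho(i)}.$$
   Context: Logarithms base 2. Fix $B>0$, $\sigma^2>0$, $\alpha\in(0,1)$ with $M:=1/\alpha$ an integer $\ge2$, and $q^\ast\in(0,1)$ with $K^\ast=q^\ast/\alpha$ an integer, $1\le K^\ast<M$. The search region of width $B$ is divided into $M$ sections of width $\alpha B$; the target lies in exactly one section, uniformly at random. At each time $n$ the agent chooses, uniformly at random among all subsets of size $K^\ast$ and independently of the past, a set of sections $A^1_n$ to probe, and observes $Y_n=X_n+Z_n$ where $X_n=1$ if the target's section lies in $A^1_n$ and $0$ otherwise, and $Z_n\sim\mathcal N(0,q^\ast B\sigma^2)$ independent of everything else. Starting from uniform $\rho'_0(i)=\alpha$, the posterior is updated by Bayes' rule: after $Y_n=y$, $\rho'_{n+1}(i)\propto\rho'_n(i)G(y;1,q^\ast B\sigma^2)$ if $i\in A^1_n$ and $\propto\rho'_n(i)G(y;0,q^\ast B\sigma^2)$ otherwise, where $G(\cdot;\mu,s^2)$ is the $\mathcal N(\mu,s^2)$ density.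 $\mathcal F_n$ is the sigma-field generated by the past observations and measurements. $C_{\mathrm{BAWGN}}(q,s^2):=-\int p(y)\log p(y)dy-\frac12\log(2\pi es^2)$ with $p(y)=(1-q)G(y;0,s^2)+qG(y;1,s^2)$. *)

theory Defs
  imports "HOL-Probability.Probability"
begin

definition G :: "real \<Rightarrow> real \<Rightarrow> real \<Rightarrow> real" where
  "G y mu s2 = exp (- ((y - mu)^2) / (2 * s2)) / sqrt (2 * pi * s2)"

text \<open>Binary-input AWGN mutual information with input probability q (logs base 2).\<close>
definition C_BAWGN :: "real \<Rightarrow> real \<Rightarrow> real" where
  "C_BAWGN q s2 =
     - (\<integral>y. ((1 - q) * G y 0 s2 + q * G y 1 s2) * log 2 ((1 - q) * G y 0 s2 + q * G y 1 s2) \<partial>lborel)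
     - 1/2 * log 2 (2 * pi * exp 1 * s2)"

definition U :: "nat \<Rightarrow> (nat \<Rightarrow> real) \<Rightarrow> real" where
  "U M rho = (\<Sum>i<M. rho i * log 2 (rho i / (1 - rho i)))"

definition lik :: "real \<Rightarrow> nat set \<Rightarrow> real \<Rightarrow> nat \<Rightarrow> real" where
  "lik s2 A y i = (if i \<in> A then G y 1 s2 else G y 0 s2)"

definition pred :: "nat \<Rightarrow> real \<Rightarrow> (nat \<Rightarrow> real) \<Rightarrow> nat set \<Rightarrow> real \<Rightarrow> real" where
  "pred M s2 rho A y = (\<Sum>j<M. rho j * lik s2 A y j)"

definition post :: "nat \<Rightarrow> real \<Rightarrow> (nat \<Rightarrow> real) \<Rightarrow> nat set \<Rightarrow> real \<Rightarrow> nat \<Rightarrow> real" where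
  "post M s2 rho A y i = rho i * lik s2 A y i / pred M s2 rho A y"

text \<open>Posterior rho'_n after probed sets As 0, ..., As (n-1) and observations ys 0, ..., ys (n-1),
  starting from the uniform prior alpha = 1/M.\<close>
fun rho_seq :: "nat \<Rightarrow> real \<Rightarrow> (nat \<Rightarrow> nat set) \<Rightarrow> (nat \<Rightarrow> real) \<Rightarrow> nat \<Rightarrow> nat \<Rightarrow> real" where
  "rho_seq M s2 As ys 0 = (\<lambda>i. 1 / real M)"
| "rho_seq M s2 As ys (Suc n) = post M s2 (rho_seq M s2 As ys n) (As n) (ys n)"

definition probe_sets :: "nat \<Rightarrow> nat \<Rightarrow> nat set set" where
  "probe_sets M K = {A. A \<subseteq> {..<M} \<and> card A = K}"

text \<open>E[U(rho'_{n+1}) | F_n] when rho'_n = rho: the probed set is uniform over the K-subsets,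
  independent of the past, and given A the observation has density pred M s2 rho A.\<close>
definition expected_next_U :: "nat \<Rightarrow> nat \<Rightarrow> real \<Rightarrow> (nat \<Rightarrow> real) \<Rightarrow> real" where
  "expected_next_U M K s2 rho =
     (\<Sum>A\<in>probe_sets M K. (\<integral>y. pred M s2 rho A y * U M (post M s2 rho A y) \<partial>lborel))
       / real (card (probe_sets M K))"

end

theory Submission
  imports Defs
begin


lemma G_nd: "s > 0 \<Longrightarrow> G y mu s = normal_density mu (sqrt s) y"
  unfolding G_def normal_density_def by simp

lemma G_pos: "s > 0 \<Longrightarrow> G y mu s > 0"
  unfolding G_def by simp

lemma G_int: "s > 0 \<Longrightarrow> integrable lborel (\<lambda>y. G y mu s)"
  by (simp add: G_nd)

lemma G_integral: "s > 0 \<Longrightarrow> (\<integral>y. G y mu s \<partial>lborel) = 1"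
  by (simp add: G_nd)

lemma G_meas[measurable]: "(\<lambda>y. G y mu s) \<in> borel_measurable borel"
  unfolding G_def by measurable

lemma log_G: "s > 0 \<Longrightarrow> log 2 (G y mu s) = - ((y - mu)^2) / (2 * s * ln 2) - log 2 (sqrt (2 * pi * s))"
  unfolding G_def log_def
  by (subst ln_div) (auto simp: diff_divide_distrib)

lemma G_sq_int: "s > 0 \<Longrightarrow> integrable lborel (\<lambda>y. G y mu s * (y - mu)^2)"
  using integrable_normal_moment[of "sqrt s" mu 2] by (simp add: G_nd)

lemma G_sq_integral: "s > 0 \<Longrightarrow> (\<integral>y. G y mu s * (y - mu)^2 \<partial>lborel) = s"
  using integral_normal_moment_even[of "sqrt s" mu 1] by (simp add: G_nd)



lemma rho_facts:
  assumes s: "s > 0" and M: "M \<ge> 1"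
  shows "(\<forall>i<M. rho_seq M s As ys n i > 0) \<and> (\<Sum>i<M. rho_seq M s As ys n i) = 1"
proof (induction n)
  case 0
  then show ?case using M by simp
next
  case (Suc n)
  let ?r = "rho_seq M s As ys n"
  have gp: "\<And>i. lik s (As n) (ys n) i > 0" unfolding lik_def G_def using s by simp
  have pp: "pred M s ?r (As n) (ys n) > 0"
    unfolding pred_def using Suc.IH gp M
    by (intro sum_pos) auto
  have "(\<Sum>i<M. rho_seq M s As ys (Suc n) i) = (\<Sum>i<M. ?r i * lik s (As n) (ys n) i) / pred M s ?r (As n) (ys n)"
    by (simp add: post_def sum_divide_distrib)
  also have "\<dots> = 1" using pp unfolding pred_def by simp
  finally show ?case using Suc.IH gp pp by (simp add: post_def)
qed

lemma probe_finite: "finite (probe_sets M K)"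
  unfolding probe_sets_def by (rule finite_subset[of _ "Pow {..<M}"]) auto

lemma card_N: "card (probe_sets M K) = M choose K"
  unfolding probe_sets_def using n_subsets[of "{..<M}" K] by simp

lemma card_d:
  assumes "i < M" "1 \<le> K"
  shows "card {A\<in>probe_sets M K. i\<in>A} = (M-1) choose (K-1)"
proof -
  have eq: "{A\<in>probe_sets M K. i\<in>A} = insert i ` {B. B \<subseteq> {..<M}-{i} \<and> card B = K-1}"
  proof (rule set_eqI iffI)+
    fix A assume "A \<in> {A\<in>probe_sets M K. i\<in>A}"
    then have A: "A \<subseteq> {..<M}" "card A = K" "i \<in> A" unfolding probe_sets_def by auto
    then have "finite A" using finite_subset by blast
    then have "A - {i} \<in> {B. B \<subseteq> {..<M}-{i} \<and> card B = K-1}" using A by auto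
    moreover have "A = insert i (A - {i})" using A by auto
    ultimately show "A \<in> insert i ` {B. B \<subseteq> {..<M}-{i} \<and> card B = K-1}" by blast
  next
    fix A assume "A \<in> insert i ` {B. B \<subseteq> {..<M}-{i} \<and> card B = K-1}"
    then obtain B where B: "B \<subseteq> {..<M}-{i}" "card B = K-1" "A = insert i B" by blast
    then have "finite B" using finite_subset by blast
    moreover have "i \<notin> B" using B by auto
    ultimately have "card (insert i B) = Suc (card B)" by (rule card_insert_disjoint)
    then have "card A = K" using B(2,3) assms(2) by simp
    then show "A \<in> {A\<in>probe_sets M K. i\<in>A}" using B assms unfolding probe_sets_def by auto
  qed
  have inj: "inj_on (insert i) {B. B \<subseteq> {..<M}-{i} \<and> card B = K-1}"
    unfolding inj_on_def by blast
  have "card {A\<in>probe_sets M K. i\<in>A} = card {B. B \<subseteq> {..<M}-{i} \<and> card B = K-1}"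
    unfolding eq using inj by (rule card_image)
  also have "\<dots> = card ({..<M}-{i}) choose (K-1)" by (rule n_subsets) simp
  also have "card ({..<M}-{i}) = M - 1" using assms by simp
  finally show ?thesis .
qed

lemma card_c:
  assumes "i < M" "j < M" "i \<noteq> j" "2 \<le> K"
  shows "card {A\<in>probe_sets M K. i\<in>A \<and> j\<in>A} = (M-2) choose (K-2)"
proof -
  let ?S = "{B. B \<subseteq> {..<M}-{i,j} \<and> card B = K-2}"
  have eq: "{A\<in>probe_sets M K. i\<in>A \<and> j\<in>A} = (\<lambda>B. insert i (insert j B)) ` ?S"
  proof (rule set_eqI iffI)+
    fix A assume "A \<in> {A\<in>probe_sets M K. i\<in>A \<and> j\<in>A}"
    then have A: "A \<subseteq> {..<M}" "card A = K" "i \<in> A" "j \<in> A" unfolding probe_sets_def by auto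
    then have "finite A" using finite_subset by blast
    then have "card (A - {i,j}) = K - 2" using A assms by (simp add: card_Diff_subset)
    then have "A - {i,j} \<in> ?S" using A by auto
    moreover have "A = insert i (insert j (A - {i,j}))" using A by auto
    ultimately show "A \<in> (\<lambda>B. insert i (insert j B)) ` ?S" by blast
  next
    fix A assume "A \<in> (\<lambda>B. insert i (insert j B)) ` ?S"
    then obtain B where B: "B \<subseteq> {..<M}-{i,j}" "card B = K-2" "A = insert i (insert j B)" by blast
    then have "finite B" using finite_subset by blast
    moreover have "i \<notin> insert j B" using B assms by auto
    moreover have "j \<notin> B" using B by auto
    ultimately have "card (insert i (insert j B)) = Suc (Suc (card B))" by (simp add: card_insert_disjoint)
    then have "card A = K" using B(2,3) assms(4) by simp
    then show "A \<in> {A\<in>probe_sets M K. i\<in>A \<and> j\<in>A}" using B assms unfolding probe_sets_def by auto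
  qed
  have inj: "inj_on (\<lambda>B. insert i (insert j B)) ?S"
    unfolding inj_on_def by blast
  have "card {A\<in>probe_sets M K. i\<in>A \<and> j\<in>A} = card ?S"
    unfolding eq using inj by (rule card_image)
  also have "\<dots> = card ({..<M}-{i,j}) choose (K-2)" by (rule n_subsets) simp
  also have "card ({..<M}-{i,j}) = M - 2" using assms by (simp add: card_Diff_subset)
  finally show ?thesis .
qed

lemma comb_d:
  assumes "i < M" "1 \<le> K"
  shows "real (card {A\<in>probe_sets M K. i\<in>A}) * real M = real (card (probe_sets M K)) * real K"
proof -
  have "K * (M choose K) = M * ((M - 1) choose (K-1))"
    using binomial_absorption[of "K-1" M] assms by simp
  then show ?thesis unfolding card_d[OF assms] card_N
    by (metis mult.commute of_nat_mult)
qed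

lemma comb_c:
  assumes "i < M" "j < M" "i \<noteq> j" "1 \<le> K" "K \<le> M"
  shows "real (card {A\<in>probe_sets M K. i\<in>A \<and> j\<in>A}) * real M ^ 2 \<le> real (card (probe_sets M K)) * real K ^ 2"
proof (cases "K = 1")
  case True
  have e0: "{A\<in>probe_sets M K. i\<in>A \<and> j\<in>A} = {}"
  proof -
    { fix A assume "A \<in> probe_sets M K" "i \<in> A" "j \<in> A"
      then have "finite A" "card A = 1" using True unfolding probe_sets_def
        by (auto intro: finite_subset)
      then obtain x where "A = {x}" using card_1_singletonE by blast
      with \<open>i\<in>A\<close> \<open>j\<in>A\<close> assms(3) have False by auto }
    then show ?thesis by blast
  qed
  show ?thesis unfolding e0 by simp
next
  case False
  then have K2: "2 \<le> K" using assms by simp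
  have a1: "K * (M choose K) = M * ((M - 1) choose (K-1))"
    using binomial_absorption[of "K-1" M] assms by simp
  have a2: "(K-1) * ((M-1) choose (K-1)) = (M-1) * ((M - 2) choose (K-2))"
    using binomial_absorption[of "K-2" "M-1"] K2 by (simp add: Suc_diff_Suc numeral_2_eq_2)
  define c where "c = (M-2) choose (K-2)"
  define N where "N = M choose K"
  have M2: "2 \<le> M" using assms K2 by simp
  have "K * (K-1) * N = (K-1) * (K * N)" by (simp add: algebra_simps)
  also have "\<dots> = (K-1) * (M * ((M - 1) choose (K-1)))" using a1 unfolding N_def by simp
  also have "\<dots> = M * ((K-1) * ((M - 1) choose (K-1)))" by (simp add: algebra_simps)
  also have "\<dots> = M * (M-1) * c" using a2 unfolding c_def by (simp add: algebra_simps)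
  finally have nat_e: "K * (K-1) * N = M * (M-1) * c" .
  have "real (K * (K-1) * N) = real (M * (M-1) * c)" using nat_e by (simp only:)
  then have e: "real K * (real K - 1) * real N = real M * (real M - 1) * real c"
    using K2 M2 by (simp add: of_nat_diff)
  have KM: "real K \<le> real M" "real K \<ge> 2" using assms K2 by auto
  have "real c * real M ^ 2 * (real M - 1) = real M * (real M * (real M - 1) * real c)"
    by (simp add: power2_eq_square algebra_simps)
  also have "\<dots> = real M * (real K * (real K - 1) * real N)" using e by simp
  also have "\<dots> \<le> real N * real K ^ 2 * (real M - 1)"
  proof -
    have "real M * (real K - 1) \<le> real K * (real M - 1)" using KM by (simp add: algebra_simps)
    then have "real M * (real K - 1) * (real K * real N) \<le> real K * (real M - 1) * (real K * real N)"
      by (rule mult_right_mono) simp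
    then show ?thesis by (simp add: power2_eq_square algebra_simps)
  qed
  finally have "real c * real M ^ 2 * (real M - 1) \<le> real N * real K ^ 2 * (real M - 1)" .
  moreover have "real M - 1 > 0" using M2 by simp
  ultimately have "real c * real M ^ 2 \<le> real N * real K ^ 2" by simp
  then show ?thesis unfolding card_c[OF assms(1-3) K2] card_N c_def N_def .
qed



lemma other_idx: assumes "(M::nat) \<ge> 2" shows "\<exists>j<M. j \<noteq> i"
proof (cases "i = 0")
  case True then show ?thesis using assms by (intro exI[of _ 1]) auto
next
  case False then show ?thesis using assms by (intro exI[of _ 0]) auto
qed

lemma key_log:
  fixes a b g v p :: real
  assumes "a > 0" "b > 0" "g > 0" "v > 0" "p > 0"
  shows "log 2 (a * g / v) \<ge> log 2 (a / b) + log 2 (g / p) - (v / (b * p) - 1) / ln 2"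
proof -
  have "a * g / v = (a / b) * (g / p) / (v / (b * p))" using assms by (simp add: field_simps)
  then have e: "log 2 (a * g / v) = log 2 (a / b) + log 2 (g / p) - log 2 (v / (b * p))"
    using assms by (simp add: log_mult log_divide)
  have "ln (v / (b * p)) \<le> v / (b * p) - 1" using assms by (intro ln_le_minus_one) simp
  then have "log 2 (v / (b * p)) \<le> (v / (b * p) - 1) / ln 2"
    unfolding log_def by (simp add: divide_right_mono)
  then show ?thesis using e by linarith
qed

lemma pred_pos:
  assumes "s > 0" "M \<ge> 1" "\<forall>i<M. r i > 0"
  shows "pred M s r A y > 0"
proof -
  have "0 \<in> {..<M}" using assms by simp
  then have ne: "{..<M} \<noteq> {}" by blast
  show ?thesis unfolding pred_def lik_def apply (rule sum_pos) apply simp using ne apply blast using assms by (auto simp: G_def)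
qed

lemma pointwise_A:
  assumes s: "s > 0" and M: "M \<ge> 2" and rpos: "\<forall>i<M. r i > 0" and rsum: "(\<Sum>i<M. r i) = 1"
    and p: "p > 0"
  shows "pred M s r A y * U M (post M s r A y) \<ge>
     (\<Sum>i<M. r i * lik s A y i * (log 2 (r i / (1 - r i)) + log 2 (lik s A y i / p)
        - ((pred M s r A y - r i * lik s A y i) / ((1 - r i) * p) - 1) / ln 2))"
proof -
  let ?m = "pred M s r A y"
  let ?g = "lik s A y"
  have gp: "\<And>i. ?g i > 0" unfolding lik_def G_def using s by simp
  have mp: "?m > 0" using pred_pos[of s M r A y] s M rpos by simp
  have v_eq: "?m - r i * ?g i = (\<Sum>j\<in>{..<M}-{i}. r j * ?g j)" if "i < M" for i
    unfolding pred_def using that by (simp add: sum_diff1)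
  have v_pos: "?m - r i * ?g i > 0" if "i < M" for i
  proof -
    obtain j where "j < M" "j \<noteq> i" using other_idx[OF M, of i] by blast
    then have "(\<Sum>j\<in>{..<M}-{i}. r j * ?g j) > 0"
      using rpos gp by (intro sum_pos2[where i=j]) (auto intro: less_imp_le)
    then show ?thesis using v_eq[OF that] by simp
  qed
  have r1: "r i < 1" if "i < M" for i
  proof -
    have "r i * ?g i < ?m" using v_pos[OF that] by simp
    then have "r i * ?g i < (\<Sum>j<M. r j * ?g j)" unfolding pred_def .
    have "(\<Sum>j<M. r j) = r i + (\<Sum>j\<in>{..<M}-{i}. r j)" using that by (simp add: sum.remove)
    moreover obtain j where "j < M" "j \<noteq> i" using other_idx[OF M, of i] by blast
    moreover then have "(\<Sum>j\<in>{..<M}-{i}. r j) > 0" using rpos by (intro sum_pos2[where i=j]) (auto intro: less_imp_le)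
    ultimately show ?thesis using rsum by simp
  qed
  have "?m * U M (post M s r A y) = (\<Sum>i<M. r i * ?g i * log 2 (r i * ?g i / (?m - r i * ?g i)))"
    unfolding U_def sum_distrib_left
  proof (rule sum.cong[OF refl])
    fix i assume "i \<in> {..<M}"
    then have e1: "post M s r A y i / (1 - post M s r A y i) = r i * ?g i / (?m - r i * ?g i)"
      unfolding post_def using mp v_pos[of i] by (simp add: field_simps)
    show "?m * (post M s r A y i * log 2 (post M s r A y i / (1 - post M s r A y i))) =
        r i * ?g i * log 2 (r i * ?g i / (?m - r i * ?g i))"
      unfolding e1 unfolding post_def using mp by simp
  qed
  also have "\<dots> \<ge> (\<Sum>i<M. r i * lik s A y i * (log 2 (r i / (1 - r i)) + log 2 (lik s A y i / p)
        - ((pred M s r A y - r i * lik s A y i) / ((1 - r i) * p) - 1) / ln 2))"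
  proof (rule sum_mono)
    fix i assume i: "i \<in> {..<M}"
    have "log 2 (r i * ?g i / (?m - r i * ?g i)) \<ge> log 2 (r i / (1 - r i)) + log 2 (?g i / p)
        - ((?m - r i * ?g i) / ((1 - r i) * p) - 1) / ln 2"
      using key_log[of "r i" "1 - r i" "?g i" "?m - r i * ?g i" p] rpos r1 gp v_pos p i by simp
    moreover have "r i * ?g i \<ge> 0" using rpos gp i by (simp add: less_imp_le)
    ultimately show "r i * ?g i * (log 2 (r i / (1 - r i)) + log 2 (?g i / p)
        - ((?m - r i * ?g i) / ((1 - r i) * p) - 1) / ln 2) \<le> r i * ?g i * log 2 (r i * ?g i / (?m - r i * ?g i))"
      by (rule mult_left_mono)
  qed
  finally show ?thesis .
qed



lemma sum_lik_phi:
  fixes phi :: "real \<Rightarrow> real"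
  assumes "i < M" "1 \<le> K"
  shows "(\<Sum>A\<in>probe_sets M K. phi (lik s A y i)) =
    real (card (probe_sets M K)) * (real K / real M * phi (G y 1 s) + (1 - real K / real M) * phi (G y 0 s))"
proof -
  let ?P = "probe_sets M K"
  let ?S1 = "{A\<in>?P. i\<in>A}" and ?S2 = "{A\<in>?P. i\<notin>A}"
  have fin: "finite ?S1" "finite ?S2" using probe_finite by auto
  have un: "?P = ?S1 \<union> ?S2" and dis: "?S1 \<inter> ?S2 = {}" by auto
  have cardP: "card ?P = card ?S1 + card ?S2" using card_Un_disjoint[OF fin dis] un by simp
  have "(\<Sum>A\<in>?P. phi (lik s A y i)) = (\<Sum>A\<in>?S1. phi (lik s A y i)) + (\<Sum>A\<in>?S2. phi (lik s A y i))"
    by (subst un) (rule sum.union_disjoint[OF fin dis])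
  also have "(\<Sum>A\<in>?S1. phi (lik s A y i)) = real (card ?S1) * phi (G y 1 s)"
    by (simp add: lik_def)
  also have "(\<Sum>A\<in>?S2. phi (lik s A y i)) = real (card ?S2) * phi (G y 0 s)"
    by (simp add: lik_def)
  finally have e: "(\<Sum>A\<in>?P. phi (lik s A y i)) = real (card ?S1) * phi (G y 1 s) + real (card ?S2) * phi (G y 0 s)" .
  have d: "real (card ?S1) * real M = real (card ?P) * real K" by (rule comb_d[OF assms])
  have M0: "real M > 0" using assms by simp
  have d': "real (card ?S1) = real (card ?P) * (real K / real M)" using d M0 by (simp add: field_simps)
  have d'': "real (card ?S2) = real (card ?P) * (1 - real K / real M)"
    using cardP d' by (simp add: algebra_simps)
  show ?thesis unfolding e d' d'' by (simp add: algebra_simps)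
qed

lemma sum_bool_card: "(\<Sum>A\<in>P. if Q A then 1 else 0 :: real) = real (card {A\<in>P. Q A})"
  if "finite P" for P
proof -
  have "(\<Sum>A\<in>P. if Q A then 1 else 0 :: real) = (\<Sum>A\<in>{A\<in>P. Q A}. 1)"
    using sum.inter_filter[OF that, of "\<lambda>_. 1::real" Q] by simp
  then show ?thesis by simp
qed

lemma sum_pair:
  assumes "i < M" "j < M" "i \<noteq> j" "1 \<le> K" "K \<le> M" "s > 0"
  shows "(\<Sum>A\<in>probe_sets M K. lik s A y i * lik s A y j) \<le>
    real (card (probe_sets M K)) * ((1 - real K / real M) * G y 0 s + real K / real M * G y 1 s)^2"
proof -
  let ?P = "probe_sets M K"
  define G0 where "G0 = G y 0 s"
  define G1 where "G1 = G y 1 s"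
  define q where "q = real K / real M"
  define N where "N = real (card ?P)"
  define c where "c = real (card {A\<in>?P. i\<in>A \<and> j\<in>A})"
  have pt: "lik s A y i * lik s A y j = G0 * lik s A y i + G0 * lik s A y j - G0^2
       + (if i\<in>A \<and> j\<in>A then 1 else 0) * (G1 - G0)^2" for A
    unfolding lik_def G0_def G1_def by (simp add: power2_eq_square algebra_simps)
  have s1: "(\<Sum>A\<in>?P. lik s A y i) = N * (q * G1 + (1 - q) * G0)"
    using sum_lik_phi[of i M K "\<lambda>x. x" s y] assms unfolding N_def q_def G0_def G1_def by simp
  have s2: "(\<Sum>A\<in>?P. lik s A y j) = N * (q * G1 + (1 - q) * G0)"
    using sum_lik_phi[of j M K "\<lambda>x. x" s y] assms unfolding N_def q_def G0_def G1_def by simp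
  have s3: "(\<Sum>A\<in>?P. (if i\<in>A \<and> j\<in>A then 1 else 0) * (G1 - G0)^2) = c * (G1 - G0)^2"
    unfolding c_def sum_distrib_right[symmetric] using sum_bool_card[OF probe_finite] by simp
  have "(\<Sum>A\<in>?P. lik s A y i * lik s A y j) = G0 * N * (q * G1 + (1 - q) * G0) + G0 * N * (q * G1 + (1 - q) * G0)
      - N * G0^2 + c * (G1 - G0)^2"
    unfolding pt sum.distrib sum_subtractf sum_distrib_left[symmetric] s1 s2 s3 N_def by simp
  also have "\<dots> \<le> G0 * N * (q * G1 + (1 - q) * G0) + G0 * N * (q * G1 + (1 - q) * G0)
      - N * G0^2 + N * q^2 * (G1 - G0)^2"
  proof -
    have "c * real M ^ 2 \<le> N * real K ^ 2" unfolding c_def N_def by (rule comb_c[OF assms(1-5)])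
    then have "c \<le> N * q^2" unfolding q_def using assms by (simp add: field_simps)
    then show ?thesis by (simp add: mult_right_mono)
  qed
  also have "\<dots> = N * ((1 - q) * G0 + q * G1)^2" by (simp add: power2_eq_square algebra_simps)
  finally show ?thesis unfolding N_def q_def G0_def G1_def .
qed



lemma r_lt1:
  fixes M i :: nat
  assumes M: "M \<ge> 2" and rpos: "\<forall>i<M. r i > 0" and rsum: "(\<Sum>i<M. (r i::real)) = 1" and i: "i < M"
  shows "r i < 1"
proof -
  have "(\<Sum>j<M. r j) = r i + (\<Sum>j\<in>{..<M}-{i}. r j)" using i by (intro sum.remove) auto
  moreover obtain j where "j < M" "j \<noteq> i" using other_idx[OF M, of i] by blast
  moreover then have "(\<Sum>j\<in>{..<M}-{i}. r j) > 0" using rpos by (intro sum_pos2[where i=j]) (auto intro: less_imp_le)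
  ultimately show ?thesis using rsum by simp
qed

lemma per_i:
  fixes M K i :: nat
  assumes s: "s > 0" and M: "M \<ge> 2" and K: "1 \<le> K" "K < M"
    and rpos: "\<forall>i<M. r i > 0" and rsum: "(\<Sum>i<M. r i) = 1" and i: "i < M"
    and pdef: "p = (1 - real K / real M) * G y 0 s + real K / real M * G y 1 s"
  shows "(\<Sum>A\<in>probe_sets M K. r i * lik s A y i * (log 2 (r i / (1 - r i)) + log 2 (lik s A y i / p)
        - ((pred M s r A y - r i * lik s A y i) / ((1 - r i) * p) - 1) / ln 2))
     \<ge> r i * real (card (probe_sets M K)) * (p * log 2 (r i / (1 - r i)) +
         (real K / real M * G y 1 s * log 2 (G y 1 s / p) + (1 - real K / real M) * G y 0 s * log 2 (G y 0 s / p)))"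
proof -
  let ?P = "probe_sets M K"
  define q where "q = real K / real M"
  define G0 where "G0 = G y 0 s"
  define G1 where "G1 = G y 1 s"
  define N where "N = real (card ?P)"
  define L where "L = log 2 (r i / (1 - r i))"
  define phi where "phi = (\<lambda>g. r i * g * (L + log 2 (g / p) + 1 / ln 2))"
  define coef where "coef = r i / ((1 - r i) * p * ln 2)"
  have G0p: "G0 > 0" and G1p: "G1 > 0" unfolding G0_def G1_def using s by (auto simp: G_pos)
  have q01: "0 \<le> q" "q \<le> 1" unfolding q_def using K by auto
  have pp: "p > 0" unfolding pdef
  proof -
    have "(1 - real K / real M) * G y 0 s \<ge> 0" using q01 G0p unfolding q_def G0_def by simp
    moreover have "real K / real M * G y 1 s > 0" using K G1p unfolding G1_def by simp
    ultimately show "(1 - real K / real M) * G y 0 s + real K / real M * G y 1 s > 0" by simp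
  qed
  have ri: "r i > 0" "r i < 1" using rpos i r_lt1[OF M rpos rsum i] by auto
  have coef0: "coef \<ge> 0" unfolding coef_def using ri pp by simp
  have termeq: "r i * lik s A y i * (L + log 2 (lik s A y i / p)
        - ((pred M s r A y - r i * lik s A y i) / ((1 - r i) * p) - 1) / ln 2)
      = phi (lik s A y i) - coef * (\<Sum>j\<in>{..<M}-{i}. r j * (lik s A y i * lik s A y j))" for A
  proof -
    have v: "pred M s r A y - r i * lik s A y i = (\<Sum>j\<in>{..<M}-{i}. r j * lik s A y j)"
      unfolding pred_def using i by (simp add: sum_diff1)
    have "(\<Sum>j\<in>{..<M}-{i}. r j * (lik s A y i * lik s A y j)) = lik s A y i * (\<Sum>j\<in>{..<M}-{i}. r j * lik s A y j)"
      by (simp add: sum_distrib_left algebra_simps)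
    then show ?thesis unfolding v phi_def coef_def using ri pp
      by (simp add: field_simps)
  qed
  have "(\<Sum>A\<in>?P. r i * lik s A y i * (log 2 (r i / (1 - r i)) + log 2 (lik s A y i / p)
        - ((pred M s r A y - r i * lik s A y i) / ((1 - r i) * p) - 1) / ln 2))
      = (\<Sum>A\<in>?P. phi (lik s A y i)) - coef * (\<Sum>j\<in>{..<M}-{i}. r j * (\<Sum>A\<in>?P. lik s A y i * lik s A y j))"
    (is "?lhs = _")
    unfolding L_def[symmetric] termeq sum_subtractf sum_distrib_left[symmetric]
    by (simp add: sum.swap[of _ ?P] sum_distrib_left)
  also have "\<dots> \<ge> (\<Sum>A\<in>?P. phi (lik s A y i)) - coef * (\<Sum>j\<in>{..<M}-{i}. r j * (N * p^2))"
  proof -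
    have "(\<Sum>j\<in>{..<M}-{i}. r j * (\<Sum>A\<in>?P. lik s A y i * lik s A y j)) \<le> (\<Sum>j\<in>{..<M}-{i}. r j * (N * p^2))"
    proof (rule sum_mono)
      fix j assume j: "j \<in> {..<M}-{i}"
      have "(\<Sum>A\<in>?P. lik s A y i * lik s A y j) \<le> N * p^2"
        using sum_pair[of i M j K s y] j i K s unfolding N_def pdef by simp
      then show "r j * (\<Sum>A\<in>?P. lik s A y i * lik s A y j) \<le> r j * (N * p^2)"
        using rpos j by (intro mult_left_mono) auto
    qed
    then show ?thesis using coef0 by (simp add: mult_left_mono)
  qed
  also have "(\<Sum>j\<in>{..<M}-{i}. r j * (N * p^2)) = (1 - r i) * (N * p^2)"
  proof -
    have "(\<Sum>j<M. r j) = r i + (\<Sum>j\<in>{..<M}-{i}. r j)" using i by (intro sum.remove) auto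
    then show ?thesis using rsum by (simp add: sum_distrib_right[symmetric])
  qed
  also have "(\<Sum>A\<in>?P. phi (lik s A y i)) = N * (q * phi G1 + (1 - q) * phi G0)"
    using sum_lik_phi[of i M K phi s y] i K unfolding N_def q_def G0_def G1_def by simp
  finally have "N * (q * phi G1 + (1 - q) * phi G0) - coef * ((1 - r i) * (N * p\<^sup>2)) \<le> ?lhs" .
  moreover have "N * (q * phi G1 + (1 - q) * phi G0) - coef * ((1 - r i) * (N * p\<^sup>2))
      = r i * N * (p * L + (q * G1 * log 2 (G1 / p) + (1 - q) * G0 * log 2 (G0 / p)))"
  proof -
    define il :: real where "il = 1 / ln 2"
    define l1 where "l1 = log 2 (G1 / p)"
    define l0 where "l0 = log 2 (G0 / p)"
    have pq: "(1 - q) * G0 + q * G1 = p" unfolding pdef q_def G0_def G1_def ..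
    have ph: "phi g = r i * g * L + r i * g * log 2 (g / p) + r i * g * il" for g
      unfolding phi_def il_def by (simp add: algebra_simps)
    have a1: "q * phi G1 + (1 - q) * phi G0 = r i * L * ((1 - q) * G0 + q * G1) + r i * (q * G1 * l1 + (1 - q) * G0 * l0)
        + r i * il * ((1 - q) * G0 + q * G1)"
      unfolding ph l1_def l0_def by (simp add: algebra_simps)
    have a2: "coef * ((1 - r i) * (N * p\<^sup>2)) = r i * N * p * il"
      unfolding coef_def il_def using ri pp by (simp add: field_simps power2_eq_square)
    show ?thesis unfolding a1 a2 pq l1_def[symmetric] l0_def[symmetric] by (simp add: algebra_simps)
  qed
  ultimately show ?thesis unfolding L_def N_def q_def G0_def G1_def by simp
qed



lemma pointwise_total:
  fixes M K :: nat
  assumes s: "s > 0" and M: "M \<ge> 2" and K: "1 \<le> K" "K < M"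
    and rpos: "\<forall>i<M. r i > 0" and rsum: "(\<Sum>i<M. r i) = 1"
    and pdef: "p = (1 - real K / real M) * G y 0 s + real K / real M * G y 1 s"
  shows "(\<Sum>A\<in>probe_sets M K. pred M s r A y * U M (post M s r A y))
     \<ge> real (card (probe_sets M K)) * (U M r * p +
         (real K / real M * G y 1 s * log 2 (G y 1 s / p) + (1 - real K / real M) * G y 0 s * log 2 (G y 0 s / p)))"
proof -
  let ?P = "probe_sets M K"
  define X where "X = real K / real M * G y 1 s * log 2 (G y 1 s / p) + (1 - real K / real M) * G y 0 s * log 2 (G y 0 s / p)"
  define N where "N = real (card ?P)"
  have pp: "p > 0" unfolding pdef
  proof -
    have "(1 - real K / real M) * G y 0 s \<ge> 0" using K s by (simp add: G_pos less_imp_le)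
    moreover have "real K / real M * G y 1 s > 0" using K s by (simp add: G_pos)
    ultimately show "(1 - real K / real M) * G y 0 s + real K / real M * G y 1 s > 0" by simp
  qed
  have "(\<Sum>i<M. r i * N * (p * log 2 (r i / (1 - r i)) + X)) =
     N * p * (\<Sum>i<M. r i * log 2 (r i / (1 - r i))) + N * X * (\<Sum>i<M. r i)"
    by (simp add: sum.distrib sum_distrib_left algebra_simps)
  then have "N * (U M r * p + X) = (\<Sum>i<M. r i * N * (p * log 2 (r i / (1 - r i)) + X))"
    unfolding U_def using rsum by (simp add: algebra_simps)
  also have "\<dots> \<le> (\<Sum>i<M. \<Sum>A\<in>?P. r i * lik s A y i * (log 2 (r i / (1 - r i)) + log 2 (lik s A y i / p)
        - ((pred M s r A y - r i * lik s A y i) / ((1 - r i) * p) - 1) / ln 2))"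
    unfolding N_def X_def
    by (rule sum_mono) (rule per_i[OF s M K rpos rsum _ pdef], simp)
  also have "\<dots> = (\<Sum>A\<in>?P. \<Sum>i<M. r i * lik s A y i * (log 2 (r i / (1 - r i)) + log 2 (lik s A y i / p)
        - ((pred M s r A y - r i * lik s A y i) / ((1 - r i) * p) - 1) / ln 2))"
    by (rule sum.swap)
  also have "\<dots> \<le> (\<Sum>A\<in>?P. pred M s r A y * U M (post M s r A y))"
    by (rule sum_mono) (rule pointwise_A[OF s M rpos rsum pp])
  finally show ?thesis unfolding N_def X_def .
qed



lemma G_poly_int:
  assumes s: "s > 0"
  shows "integrable lborel (\<lambda>y. G y a s * (1 + y^2))"
proof -
  have e: "G y a s * (1 + y^2) = (1 + a^2) * G y a s + 2 * a * (G y a s * (y - a)^1) + G y a s * (y - a)^2" for y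
    by (simp add: power2_eq_square algebra_simps)
  have i1: "integrable lborel (\<lambda>y. G y a s * (y - a)^k)" for k
    using integrable_normal_moment[of "sqrt s" a k] s by (simp add: G_nd)
  have j1: "integrable lborel (\<lambda>y. (1 + a^2) * G y a s)" using G_int[OF s, of a] by (rule integrable_mult_right)
  have j2: "integrable lborel (\<lambda>y. 2 * a * (G y a s * (y - a)^1))" using i1[of 1] by (rule integrable_mult_right)
  show ?thesis unfolding e by (rule Bochner_Integration.integrable_add[OF Bochner_Integration.integrable_add[OF j1 j2] i1[of 2]])
qed

definition K0 :: "real \<Rightarrow> real" where
  "K0 s = 1 / (s * ln 2) + \<bar>log 2 (sqrt (2 * pi * s))\<bar>"

lemma K0_pos: "s > 0 \<Longrightarrow> K0 s > 0"
  unfolding K0_def by (simp add: add_pos_nonneg)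

lemma logG_bound:
  assumes s: "s > 0" and a: "\<bar>a\<bar> \<le> 1"
  shows "\<bar>log 2 (G y a s)\<bar> \<le> K0 s * (1 + y^2)"
proof -
  define c where "c = log 2 (sqrt (2 * pi * s))"
  have l: "log 2 (G y a s) = - ((y - a)^2) / (2 * s * ln 2) - c" using log_G[OF s] c_def by simp
  have "(y - a)^2 \<le> 2 * (1 + y^2)"
  proof -
    have "2 * y^2 + 2 * a^2 - (y - a)^2 = (y + a)^2" by (simp add: power2_eq_square algebra_simps)
    then have "(y - a)^2 \<le> 2 * y^2 + 2 * a^2" using zero_le_power2[of "y + a"] by linarith
    moreover have "a^2 \<le> 1" using a by (simp add: abs_square_le_1)
    ultimately show ?thesis by simp
  qed
  then have "(y - a)^2 / (2 * s * ln 2) \<le> 2 * (1 + y^2) / (2 * s * ln 2)" using s by (simp add: divide_right_mono)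
  also have "\<dots> = (1 / (s * ln 2)) * (1 + y^2)" using s by (simp add: field_simps)
  finally have t1: "(y - a)^2 / (2 * s * ln 2) \<le> (1 / (s * ln 2)) * (1 + y^2)" .
  have t0: "(y - a)^2 / (2 * s * ln 2) \<ge> 0" using s by simp
  have t2: "\<bar>c\<bar> \<le> \<bar>c\<bar> * (1 + y^2)" by (simp add: mult_le_cancel_left1)
  have "\<bar>log 2 (G y a s)\<bar> \<le> (y - a)^2 / (2 * s * ln 2) + \<bar>c\<bar>" unfolding l using t0 by linarith
  also have "\<dots> \<le> K0 s * (1 + y^2)"
  proof -
    have "K0 s * (1 + y^2) = (1 / (s * ln 2)) * (1 + y^2) + \<bar>c\<bar> * (1 + y^2)"
      unfolding K0_def c_def by (simp add: algebra_simps)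
    then show ?thesis using t1 t2 by linarith
  qed
  finally show ?thesis .
qed

lemma log_between:
  fixes x a b :: real
  assumes "a > 0" "b > 0" "min a b \<le> x" "x \<le> max a b"
  shows "\<bar>log 2 x\<bar> \<le> \<bar>log 2 a\<bar> + \<bar>log 2 b\<bar>"
proof -
  have x: "x > 0" using assms by (simp add: min_def split: if_splits)
  have "log 2 (min a b) \<le> log 2 x" using assms x by simp
  moreover have "log 2 x \<le> log 2 (max a b)" using assms x by simp
  moreover have "log 2 (min a b) = min (log 2 a) (log 2 b)" using assms by (simp add: min_def)
  moreover have "log 2 (max a b) = max (log 2 a) (log 2 b)" using assms by (simp add: max_def)
  ultimately show ?thesis by (simp add: min_def max_def split: if_splits)
qed



lemma dom_int:
  assumes s: "s > 0" and c: "c \<ge> 0" and d: "d \<ge> 0"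
    and meas: "f \<in> borel_measurable lborel"
    and bnd: "\<And>y. \<bar>f y\<bar> \<le> (G y 0 s + G y 1 s) * (c + d * (1 + y^2))"
  shows "integrable lborel f"
proof -
  define D where "D = (\<lambda>y. c * G y 0 s + c * G y 1 s + d * (G y 0 s * (1 + y^2)) + d * (G y 1 s * (1 + y^2)))"
  have iD: "integrable lborel D" unfolding D_def
    using G_int[OF s, of 0] G_int[OF s, of 1] G_poly_int[OF s, of 0] G_poly_int[OF s, of 1]
    by (intro Bochner_Integration.integrable_add integrable_mult_right) auto
  have ae: "AE y in lborel. norm (f y) \<le> norm (D y)"
  proof (rule AE_I2)
    fix y
    have "D y = (G y 0 s + G y 1 s) * (c + d * (1 + y^2))" unfolding D_def by (simp add: algebra_simps)
    then show "norm (f y) \<le> norm (D y)" using bnd[of y] by simp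
  qed
  show ?thesis by (rule Bochner_Integration.integrable_bound[OF iD meas ae])
qed

lemma G_log_G_bound:
  assumes s: "s > 0" and a: "\<bar>a\<bar> \<le> 1"
  shows "\<bar>G y a s * log 2 (G y a s)\<bar> \<le> G y a s * (K0 s * (1 + y^2))"
  using logG_bound[OF s a, of y] G_pos[OF s, of y a] by (simp add: abs_mult mult_left_mono)

lemma G_log_G_int:
  assumes s: "s > 0" and a: "a = 0 \<or> a = 1"
  shows "integrable lborel (\<lambda>y. G y a s * log 2 (G y a s))"
proof (rule dom_int[OF s, of 0 "K0 s"])
  show "(0::real) \<le> 0" by simp
  show "0 \<le> K0 s" using K0_pos[OF s] by simp
  show "(\<lambda>y. G y a s * log 2 (G y a s)) \<in> borel_measurable lborel" by measurable
  fix y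
  have "\<bar>G y a s * log 2 (G y a s)\<bar> \<le> G y a s * (K0 s * (1 + y^2))"
    using a by (intro G_log_G_bound[OF s]) auto
  also have "\<dots> \<le> (G y 0 s + G y 1 s) * (0 + K0 s * (1 + y^2))"
  proof -
    have "G y a s \<le> G y 0 s + G y 1 s" using a G_pos[OF s, of y 0] G_pos[OF s, of y 1] by auto
    moreover have "0 \<le> K0 s * (1 + y^2)" using K0_pos[OF s] by simp
    ultimately show ?thesis by (simp add: mult_right_mono)
  qed
  finally show "\<bar>G y a s * log 2 (G y a s)\<bar> \<le> (G y 0 s + G y 1 s) * (0 + K0 s * (1 + y^2))" .
qed

lemma log_mix_bound:
  assumes s: "s > 0" and x: "min (G y 0 s) (G y 1 s) \<le> x" "x \<le> max (G y 0 s) (G y 1 s)"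
  shows "\<bar>log 2 x\<bar> \<le> 2 * K0 s * (1 + y^2)"
proof -
  have "\<bar>log 2 x\<bar> \<le> \<bar>log 2 (G y 0 s)\<bar> + \<bar>log 2 (G y 1 s)\<bar>"
    using G_pos[OF s] x by (intro log_between) auto
  also have "\<dots> \<le> K0 s * (1 + y^2) + K0 s * (1 + y^2)"
    using logG_bound[OF s, of 0 y] logG_bound[OF s, of 1 y] by (intro add_mono) auto
  finally show ?thesis by simp
qed

lemma p_log_p_int:
  assumes s: "s > 0" and q: "0 \<le> q" "q \<le> 1"
  shows "integrable lborel (\<lambda>y. ((1 - q) * G y 0 s + q * G y 1 s) * log 2 ((1 - q) * G y 0 s + q * G y 1 s))"
proof (rule dom_int[OF s, of 0 "2 * K0 s"])
  show "(0::real) \<le> 0" by simp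
  show "0 \<le> 2 * K0 s" using K0_pos[OF s] by simp
  show "(\<lambda>y. ((1 - q) * G y 0 s + q * G y 1 s) * log 2 ((1 - q) * G y 0 s + q * G y 1 s)) \<in> borel_measurable lborel"
    by measurable
  fix y
  define G0 where "G0 = G y 0 s"
  define G1 where "G1 = G y 1 s"
  have g: "G0 > 0" "G1 > 0" unfolding G0_def G1_def using G_pos[OF s] by auto
  define p where "p = (1 - q) * G0 + q * G1"
  have lo: "min G0 G1 \<le> p"
  proof -
    have "(1 - q) * min G0 G1 + q * min G0 G1 \<le> p" unfolding p_def using q
      by (intro add_mono mult_left_mono) auto
    then show ?thesis by (simp add: algebra_simps)
  qed
  have hi: "p \<le> max G0 G1"
  proof -
    have "p \<le> (1 - q) * max G0 G1 + q * max G0 G1" unfolding p_def using q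
      by (intro add_mono mult_left_mono) auto
    then show ?thesis by (simp add: algebra_simps)
  qed
  have p0: "0 \<le> p" "p \<le> G0 + G1" using lo hi g by (auto simp: min_def max_def split: if_splits)
  have "\<bar>p * log 2 p\<bar> = p * \<bar>log 2 p\<bar>" using p0 by (simp add: abs_mult)
  also have "\<dots> \<le> (G0 + G1) * (2 * K0 s * (1 + y^2))"
    using log_mix_bound[OF s, of y p] lo hi p0 unfolding G0_def G1_def
    by (intro mult_mono) (auto simp: add_nonneg_nonneg)
  finally show "\<bar>((1 - q) * G y 0 s + q * G y 1 s) * log 2 ((1 - q) * G y 0 s + q * G y 1 s)\<bar>
     \<le> (G y 0 s + G y 1 s) * (0 + 2 * K0 s * (1 + y^2))" unfolding p_def G0_def G1_def by simp
qed



lemma fA_eq: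
  assumes s: "s > 0" and M: "M \<ge> 2" and rpos: "\<forall>i<M. r i > 0" and rsum: "(\<Sum>i<M. r i) = 1"
  shows "pred M s r A y * U M (post M s r A y) =
    (\<Sum>i<M. r i * lik s A y i * log 2 (r i * lik s A y i / (pred M s r A y - r i * lik s A y i)))"
proof -
  let ?m = "pred M s r A y"
  let ?g = "lik s A y"
  have gp: "\<And>i. ?g i > 0" unfolding lik_def G_def using s by simp
  have mp: "?m > 0" using pred_pos[of s M r A y] s M rpos by simp
  have v_eq: "?m - r i * ?g i = (\<Sum>j\<in>{..<M}-{i}. r j * ?g j)" if "i < M" for i
    unfolding pred_def using that by (simp add: sum_diff1)
  have v_pos: "?m - r i * ?g i > 0" if "i < M" for i
  proof -
    obtain j where "j < M" "j \<noteq> i" using other_idx[OF M, of i] by blast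
    then have "(\<Sum>j\<in>{..<M}-{i}. r j * ?g j) > 0"
      using rpos gp by (intro sum_pos2[where i=j]) (auto intro: less_imp_le)
    then show ?thesis using v_eq[OF that] by simp
  qed
  show ?thesis
    unfolding U_def sum_distrib_left
  proof (rule sum.cong[OF refl])
    fix i assume "i \<in> {..<M}"
    then have e1: "post M s r A y i / (1 - post M s r A y i) = r i * ?g i / (?m - r i * ?g i)"
      unfolding post_def using mp v_pos[of i] by (simp add: field_simps)
    show "?m * (post M s r A y i * log 2 (post M s r A y i / (1 - post M s r A y i))) =
        r i * ?g i * log 2 (r i * ?g i / (?m - r i * ?g i))"
      unfolding e1 unfolding post_def using mp by simp
  qed
qed

lemma term_bound:
  assumes s: "s > 0" and M: "M \<ge> 2" and rpos: "\<forall>i<M. r i > 0" and rsum: "(\<Sum>i<M. r i) = 1"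
    and i: "i < M"
  shows "\<bar>r i * lik s A y i * log 2 (r i * lik s A y i / (pred M s r A y - r i * lik s A y i))\<bar>
     \<le> (G y 0 s + G y 1 s) * ((\<bar>log 2 (r i)\<bar> + \<bar>log 2 (1 - r i)\<bar>) + 3 * K0 s * (1 + y^2))"
proof -
  define G0 where "G0 = G y 0 s"
  define G1 where "G1 = G y 1 s"
  let ?g = "lik s A y"
  define v where "v = pred M s r A y - r i * ?g i"
  have g01: "G0 > 0" "G1 > 0" unfolding G0_def G1_def using G_pos[OF s] by auto
  have gi: "?g i = G0 \<or> ?g i = G1" "?g i > 0" for i unfolding lik_def G0_def G1_def using G_pos[OF s] by auto
  have ri: "r i > 0" "r i < 1" using rpos i r_lt1[OF M rpos rsum i] by auto
  have v_eq: "v = (\<Sum>j\<in>{..<M}-{i}. r j * ?g j)"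
    unfolding v_def pred_def using i by (simp add: sum_diff1)
  have rs: "(\<Sum>j\<in>{..<M}-{i}. r j) = 1 - r i"
  proof -
    have "(\<Sum>j<M. r j) = r i + (\<Sum>j\<in>{..<M}-{i}. r j)" using i by (intro sum.remove) auto
    then show ?thesis using rsum by simp
  qed
  have vlo: "(1 - r i) * min G0 G1 \<le> v"
  proof -
    have "(\<Sum>j\<in>{..<M}-{i}. r j * min G0 G1) \<le> (\<Sum>j\<in>{..<M}-{i}. r j * ?g j)"
    proof (rule sum_mono)
      fix j assume "j \<in> {..<M}-{i}"
      then have "r j \<ge> 0" using rpos by (simp add: less_imp_le)
      moreover have "min G0 G1 \<le> ?g j" using gi(1)[of j] by auto
      ultimately show "r j * min G0 G1 \<le> r j * ?g j" by (rule mult_left_mono[rotated])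
    qed
    then show ?thesis unfolding v_eq sum_distrib_right[symmetric] rs .
  qed
  have vhi: "v \<le> (1 - r i) * max G0 G1"
  proof -
    have "(\<Sum>j\<in>{..<M}-{i}. r j * ?g j) \<le> (\<Sum>j\<in>{..<M}-{i}. r j * max G0 G1)"
    proof (rule sum_mono)
      fix j assume "j \<in> {..<M}-{i}"
      then have "r j \<ge> 0" using rpos by (simp add: less_imp_le)
      moreover have "?g j \<le> max G0 G1" using gi(1)[of j] by auto
      ultimately show "r j * ?g j \<le> r j * max G0 G1" by (rule mult_left_mono[rotated])
    qed
    then show ?thesis unfolding v_eq sum_distrib_right[symmetric] rs .
  qed
  define w where "w = v / (1 - r i)"
  have wlo: "min G0 G1 \<le> w" unfolding w_def using vlo ri by (simp add: field_simps)
  have whi: "w \<le> max G0 G1" unfolding w_def using vhi ri by (simp add: field_simps)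
  have wpos: "w > 0" using wlo g01 by (simp add: min_def split: if_splits)
  have v_w: "v = (1 - r i) * w" unfolding w_def using ri by simp
  have L: "log 2 (r i * ?g i / v) = log 2 (r i) + log 2 (?g i) - log 2 (1 - r i) - log 2 w"
    unfolding v_w using ri gi(2)[of i] wpos by (simp add: log_mult log_divide)
  have lg: "\<bar>log 2 (?g i)\<bar> \<le> K0 s * (1 + y^2)"
    unfolding lik_def using logG_bound[OF s, of 1 y] logG_bound[OF s, of 0 y] by auto
  have lw: "\<bar>log 2 w\<bar> \<le> 2 * K0 s * (1 + y^2)"
    using log_mix_bound[OF s, of y w] wlo whi unfolding G0_def G1_def by simp
  have Lb: "\<bar>log 2 (r i * ?g i / v)\<bar> \<le> (\<bar>log 2 (r i)\<bar> + \<bar>log 2 (1 - r i)\<bar>) + 3 * K0 s * (1 + y^2)"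
    unfolding L using lg lw by linarith
  have xb: "\<bar>r i * ?g i\<bar> \<le> G0 + G1"
  proof -
    have "r i * ?g i \<le> ?g i" using ri gi(2)[of i] by (simp add: mult_le_cancel_right1 less_imp_le)
    also have "\<dots> \<le> G0 + G1" using gi(1)[of i] g01 by auto
    finally show ?thesis using ri gi(2)[of i] by simp
  qed
  have "\<bar>r i * ?g i * log 2 (r i * ?g i / v)\<bar> = \<bar>r i * ?g i\<bar> * \<bar>log 2 (r i * ?g i / v)\<bar>"
    by (simp add: abs_mult)
  also have "\<dots> \<le> (G0 + G1) * ((\<bar>log 2 (r i)\<bar> + \<bar>log 2 (1 - r i)\<bar>) + 3 * K0 s * (1 + y^2))"
    using xb Lb g01 by (intro mult_mono) auto
  finally show ?thesis unfolding v_def G0_def G1_def .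
qed

lemma fA_int:
  assumes s: "s > 0" and M: "M \<ge> 2" and rpos: "\<forall>i<M. r i > 0" and rsum: "(\<Sum>i<M. r i) = 1"
  shows "integrable lborel (\<lambda>y. pred M s r A y * U M (post M s r A y))"
proof (rule dom_int[OF s, of "\<Sum>i<M. \<bar>log 2 (r i)\<bar> + \<bar>log 2 (1 - r i)\<bar>" "real M * (3 * K0 s)"])
  show "0 \<le> (\<Sum>i<M. \<bar>log 2 (r i)\<bar> + \<bar>log 2 (1 - r i)\<bar>)" by (intro sum_nonneg) auto
  show "0 \<le> real M * (3 * K0 s)" using K0_pos[OF s] by simp
  show "(\<lambda>y. pred M s r A y * U M (post M s r A y)) \<in> borel_measurable lborel"
    unfolding pred_def U_def post_def lik_def by measurable
  fix y
  have "\<bar>pred M s r A y * U M (post M s r A y)\<bar> \<le>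
     (\<Sum>i<M. \<bar>r i * lik s A y i * log 2 (r i * lik s A y i / (pred M s r A y - r i * lik s A y i))\<bar>)"
    unfolding fA_eq[OF s M rpos rsum] by (rule sum_abs)
  also have "\<dots> \<le> (\<Sum>i<M. (G y 0 s + G y 1 s) * ((\<bar>log 2 (r i)\<bar> + \<bar>log 2 (1 - r i)\<bar>) + 3 * K0 s * (1 + y^2)))"
    by (rule sum_mono) (rule term_bound[OF s M rpos rsum], simp)
  also have "\<dots> = (G y 0 s + G y 1 s) * ((\<Sum>i<M. \<bar>log 2 (r i)\<bar> + \<bar>log 2 (1 - r i)\<bar>) + real M * (3 * K0 s) * (1 + y^2))"
    by (simp add: sum_distrib_left sum.distrib algebra_simps)
  finally show "\<bar>pred M s r A y * U M (post M s r A y)\<bar> \<le>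
     (G y 0 s + G y 1 s) * ((\<Sum>i<M. \<bar>log 2 (r i)\<bar> + \<bar>log 2 (1 - r i)\<bar>) + real M * (3 * K0 s) * (1 + y^2))" .
qed



lemma G_log_G_integral:
  assumes s: "s > 0"
  shows "(\<integral>y. G y a s * log 2 (G y a s) \<partial>lborel) = - 1/2 * log 2 (2 * pi * exp 1 * s)"
proof -
  define c where "c = log 2 (sqrt (2 * pi * s))"
  have e: "G y a s * log 2 (G y a s) = (- 1 / (2 * s * ln 2)) * (G y a s * (y - a)^2) - c * G y a s" for y
    unfolding log_G[OF s] c_def by (simp add: algebra_simps)
  have "(\<integral>y. G y a s * log 2 (G y a s) \<partial>lborel) =
      (\<integral>y. (- 1 / (2 * s * ln 2)) * (G y a s * (y - a)^2) \<partial>lborel) - (\<integral>y. c * G y a s \<partial>lborel)"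
    unfolding e using G_sq_int[OF s, of a] G_int[OF s, of a]
    by (intro Bochner_Integration.integral_diff) auto
  also have "\<dots> = (- 1 / (2 * s * ln 2)) * s - c"
    using G_sq_integral[OF s, of a] G_integral[OF s, of a] by simp
  also have "\<dots> = - 1 / (2 * ln 2) - c" using s by simp
  also have "\<dots> = - 1/2 * log 2 (2 * pi * exp 1 * s)"
  proof -
    have "log 2 ((2 * pi * s) * exp 1) = log 2 (2 * pi * s) + log 2 (exp 1)"
      using s by (intro log_mult_pos) auto
    moreover have B: "2 * pi * exp 1 * s = (2 * pi * s) * exp 1" by (simp add: algebra_simps)
    ultimately have "log 2 (2 * pi * exp 1 * s) = log 2 (2 * pi * s) + log 2 (exp 1)" by (simp only: B)
    moreover have "log 2 (exp 1) = 1 / ln 2" unfolding log_def by simp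
    moreover have "c = log 2 (2 * pi * s) / 2" unfolding c_def log_def using s by (simp add: ln_sqrt)
    ultimately show ?thesis by (simp add: algebra_simps)
  qed
  finally show ?thesis .
qed

lemma main_general:
  fixes M K :: nat
  assumes s: "s > 0" and M: "M \<ge> 2" and K: "1 \<le> K" "K < M"
    and rpos: "\<forall>i<M. r i > 0" and rsum: "(\<Sum>i<M. r i) = 1"
  shows "expected_next_U M K s r - U M r \<ge> C_BAWGN (real K / real M) s"
proof -
  let ?P = "probe_sets M K"
  define q where "q = real K / real M"
  define N where "N = real (card ?P)"
  define p where "p = (\<lambda>y. (1 - q) * G y 0 s + q * G y 1 s)"
  define h where "h = (\<lambda>y. U M r * p y + (q * G y 1 s * log 2 (G y 1 s / p y) + (1 - q) * G y 0 s * log 2 (G y 0 s / p y)))"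
  define f where "f = (\<lambda>A y. pred M s r A y * U M (post M s r A y))"
  have q01: "0 \<le> q" "q \<le> 1" unfolding q_def using K by auto
  have Npos: "N > 0" unfolding N_def card_N using K by simp
  have ppos: "p y > 0" for y
  proof -
    have "(1 - q) * G y 0 s \<ge> 0" using q01 G_pos[OF s, of y 0] by simp
    moreover have "q * G y 1 s > 0" using K G_pos[OF s, of y 1] unfolding q_def by simp
    ultimately show ?thesis unfolding p_def by simp
  qed
  have h_alt: "h y = U M r * p y + q * (G y 1 s * log 2 (G y 1 s)) + (1 - q) * (G y 0 s * log 2 (G y 0 s))
      - p y * log 2 (p y)" for y
  proof -
    have a1: "log 2 (G y 1 s / p y) = log 2 (G y 1 s) - log 2 (p y)"
      using G_pos[OF s, of y 1] ppos[of y] by (simp add: log_divide)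
    have a0: "log 2 (G y 0 s / p y) = log 2 (G y 0 s) - log 2 (p y)"
      using G_pos[OF s, of y 0] ppos[of y] by (simp add: log_divide)
    have "h y = U M r * p y + q * (G y 1 s * log 2 (G y 1 s)) + (1 - q) * (G y 0 s * log 2 (G y 0 s))
      - ((1 - q) * G y 0 s + q * G y 1 s) * log 2 (p y)"
      unfolding h_def a1 a0 by (simp add: algebra_simps)
    also have "(1 - q) * G y 0 s + q * G y 1 s = p y" unfolding p_def ..
    finally show ?thesis .
  qed
  have ip: "integrable lborel p" unfolding p_def
    using G_int[OF s, of 0] G_int[OF s, of 1] by (intro Bochner_Integration.integrable_add integrable_mult_right) auto
  have i1: "integrable lborel (\<lambda>y. G y 1 s * log 2 (G y 1 s))" by (rule G_log_G_int[OF s]) simp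
  have i0: "integrable lborel (\<lambda>y. G y 0 s * log 2 (G y 0 s))" by (rule G_log_G_int[OF s]) simp
  have ipp: "integrable lborel (\<lambda>y. p y * log 2 (p y))" unfolding p_def by (rule p_log_p_int[OF s q01])
  have ih: "integrable lborel h" unfolding h_alt[abs_def]
    using ip i1 i0 ipp
    by (intro Bochner_Integration.integrable_diff Bochner_Integration.integrable_add integrable_mult_right) auto
  have intp: "(\<integral>y. p y \<partial>lborel) = 1"
  proof -
    have "(\<integral>y. p y \<partial>lborel) = (1 - q) * (\<integral>y. G y 0 s \<partial>lborel) + q * (\<integral>y. G y 1 s \<partial>lborel)"
      unfolding p_def using G_int[OF s, of 0] G_int[OF s, of 1] by simp
    then show ?thesis using G_integral[OF s] by simp
  qed
  have inth: "(\<integral>y. h y \<partial>lborel) = U M r + C_BAWGN q s"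
  proof -
    define E where "E = - 1/2 * log 2 (2 * pi * exp 1 * s)"
    have "(\<integral>y. h y \<partial>lborel) = U M r * (\<integral>y. p y \<partial>lborel) + q * (\<integral>y. G y 1 s * log 2 (G y 1 s) \<partial>lborel)
        + (1 - q) * (\<integral>y. G y 0 s * log 2 (G y 0 s) \<partial>lborel) - (\<integral>y. p y * log 2 (p y) \<partial>lborel)"
      unfolding h_alt using ip i1 i0 ipp by simp
    also have "\<dots> = U M r + q * E + (1 - q) * E - (\<integral>y. p y * log 2 (p y) \<partial>lborel)"
      using intp G_log_G_integral[OF s] unfolding E_def by simp
    also have "\<dots> = U M r + E - (\<integral>y. p y * log 2 (p y) \<partial>lborel)"
      by (simp add: algebra_simps)
    also have "\<dots> = U M r + C_BAWGN q s"
      unfolding C_BAWGN_def p_def E_def by simp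
    finally show ?thesis .
  qed
  have iA: "integrable lborel (f A)" for A unfolding f_def by (rule fA_int[OF s M rpos rsum])
  have pw: "N * h y \<le> (\<Sum>A\<in>?P. f A y)" for y
    unfolding f_def N_def h_def q_def
    by (rule pointwise_total[OF s M K rpos rsum]) (simp add: p_def q_def)
  have "expected_next_U M K s r = (\<Sum>A\<in>?P. \<integral>y. f A y \<partial>lborel) / N"
    unfolding expected_next_U_def f_def N_def ..
  also have "(\<Sum>A\<in>?P. \<integral>y. f A y \<partial>lborel) = (\<integral>y. (\<Sum>A\<in>?P. f A y) \<partial>lborel)"
    using integral_sum[where I="?P" and f=f] iA by simp
  also have "(\<integral>y. (\<Sum>A\<in>?P. f A y) \<partial>lborel) \<ge> (\<integral>y. N * h y \<partial>lborel)"
    by (rule integral_mono) (use ih iA pw in auto)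
  then have "(\<integral>y. (\<Sum>A\<in>?P. f A y) \<partial>lborel) / N \<ge> (\<integral>y. N * h y \<partial>lborel) / N"
    using Npos by (simp add: pos_le_divide_eq mult.commute)
  also have "(\<integral>y. N * h y \<partial>lborel) / N = U M r + C_BAWGN q s" using Npos inth by simp
  finally show ?thesis unfolding q_def by simp
qed


theorem lemma3:
  fixes B sigma2 :: real and M K n :: nat
    and As :: "nat \<Rightarrow> nat set" and ys :: "nat \<Rightarrow> real"
  assumes "B > 0" and "sigma2 > 0"
    and "M \<ge> 2" and "1 \<le> K" and "K < M"
    and "n \<ge> 1"
    and "\<And>k. k < n \<Longrightarrow> As k \<in> probe_sets M K"
  shows "expected_next_U M K (real K / real M * B * sigma2) (rho_seq M (real K / real M * B * sigma2) As ys n)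
           - U M (rho_seq M (real K / real M * B * sigma2) As ys n)
         \<ge> C_BAWGN (real K / real M) (real K / real M * B * sigma2)"
proof -
  have s: "real K / real M * B * sigma2 > 0" using assms by simp
  have M1: "M \<ge> 1" using assms by simp
  have rf: "(\<forall>i<M. rho_seq M (real K / real M * B * sigma2) As ys n i > 0) \<and>
      (\<Sum>i<M. rho_seq M (real K / real M * B * sigma2) As ys n i) = 1"
    by (rule rho_facts[OF s M1])
  show ?thesis
    using main_general[OF s assms(3) assms(4) assms(5) conjunct1[OF rf] conjunct2[OF rf]] .
qed

end
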